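(* Let $g(x)=(x+1)\ln(x+1)-x\ln x$. For $\eta\in[0,1)$, $N_S>0$ and $\lambda\in(0,1]$ with $\lambda(1-\eta)N_S\ge 2$, \[ \big[g(N_S)+g(\eta N_S)-g((1-\eta)N_S)\big]-\big[g(\lambda N_S)+g(\eta N_S)-g((1-\eta)\lambda N_S)\big]\le \frac{5}{6\lambda N_S(1-\eta)} . \] Consequently, for $\epsilon>0$, choosing $\lambda=5/[6\epsilon N_S(1-\eta)\ln 2]$, whenever $\lambda(1-\eta)N_S\ge2$, makes the limited-entanglement classical rate $g_2(\lambda N_S)+g_2(\eta N_S)-g_2((1-\eta)\lambda N_S)$ within $\epsilon$ bits of the entanglement-assisted classical capacity $g_2(N_S)+g_2(\eta N_S)-g_2((1-\eta)N_S)$, where $g_2(x)=(x+1)\log_2(x+1)-x\log_2 x$.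
   Context: These quantities refer to a pure-loss bosonic channel with transmissivity $\eta$ and mean input photon number constraint $N_S$: $g(N_S)+g(\eta N_S)-g((1-\eta)N_S)$ is its entanglement-assisted classical capacity, and $g(\lambda N_S)+g(\eta N_S)-g((1-\eta)\lambda N_S)$ is the classical rate achievable by a trade-off code dedicating a fraction $\lambda$ of the photons to shared entanglement. *)

theory Defs
  imports Complex_Main
begin

text \<open>g(x) = (x+1) ln(x+1) - x ln x, with the convention 0 ln 0 = 0
  (Isabelle has ln 0 = 0, so g 0 = 0 as intended).\<close>
definition g :: "real \<Rightarrow> real" where
  "g x = (x + 1) * ln (x + 1) - x * ln x"

definition g2 :: "real \<Rightarrow> real" where
  "g2 x = (x + 1) * log 2 (x + 1) - x * log 2 x"

end

theory Submission
  imports Defs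
begin

lemma L1: fixes t :: real assumes "t \<ge> 0" shows "t - t^2/2 \<le> ln (1+t)"
proof -
  let ?f = "\<lambda>t::real. ln (1+t) - t + t^2/2"
  have "?f 0 \<le> ?f t"
  proof (rule DERIV_nonneg_imp_nondecreasing[OF assms])
    fix x :: real assume x: "0 \<le> x" "x \<le> t"
    have "DERIV ?f x :> 1/(1+x) - 1 + x"
      by (rule derivative_eq_intros refl | use x in simp)+
    moreover have "1/(1+x) - 1 + x = x^2/(1+x)" using x by (simp add: field_simps power2_eq_square)
    moreover have "x^2/(1+x) \<ge> 0" using x by simp
    ultimately show "\<exists>y. DERIV ?f x :> y \<and> y \<ge> 0" by auto
  qed
  then show ?thesis by simp
qed

lemma L2: fixes t :: real assumes "t \<ge> 0" shows "ln (1+t) \<le> t - t^2/2 + t^3/3"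
proof -
  let ?f = "\<lambda>t::real. t - t^2/2 + t^3/3 - ln (1+t)"
  have "?f 0 \<le> ?f t"
  proof (rule DERIV_nonneg_imp_nondecreasing[OF assms])
    fix x :: real assume x: "0 \<le> x" "x \<le> t"
    have "DERIV ?f x :> 1 - x + x^2 - 1/(1+x)"
      by (rule derivative_eq_intros refl | use x in simp)+
    moreover have "1 - x + x^2 - 1/(1+x) = x^3/(1+x)" using x
      by (simp add: field_simps power2_eq_square power3_eq_cube)
    moreover have "x^3/(1+x) \<ge> 0" using x by simp
    ultimately show "\<exists>y. DERIV ?f x :> y \<and> y \<ge> 0" by auto
  qed
  then show ?thesis by simp
qed

lemma L3: fixes u :: real assumes "u > 0" shows "1/(u+1) \<le> ln (u+1) - ln u"
proof -
  have "ln (u/(u+1)) \<le> u/(u+1) - 1" using assms by (intro ln_le_minus_one) simp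
  moreover have "ln (u/(u+1)) = ln u - ln (u+1)" using assms by (simp add: ln_div)
  moreover have "u/(u+1) - 1 = - (1/(u+1))" using assms by (simp add: field_simps)
  ultimately show ?thesis by linarith
qed

lemma L4: fixes u v :: real assumes "0 < u" "u \<le> v"
  shows "u * (ln (u+1) - ln u) \<le> v * (ln (v+1) - ln v)"
proof (rule DERIV_nonneg_imp_nondecreasing[OF assms(2)])
  fix x :: real assume x: "u \<le> x" "x \<le> v"
  have xp: "x > 0" using x assms by simp
  have "DERIV (\<lambda>x. x * (ln (x+1) - ln x)) x :> (ln (x+1) - ln x) + x * (1/(x+1) - 1/x)"
    by (rule derivative_eq_intros refl | use xp in simp)+
  moreover have "(ln (x+1) - ln x) + x * (1/(x+1) - 1/x) = (ln (x+1) - ln x) - 1/(x+1)"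
  proof -
    have "x + x*x > 0" using xp by (simp add: add_pos_pos)
    then show ?thesis using xp by (simp add: field_simps)
  qed
  moreover have "(ln (x+1) - ln x) - 1/(x+1) \<ge> 0" using L3[OF xp] by simp
  ultimately show "\<exists>y. DERIV (\<lambda>x. x * (ln (x+1) - ln x)) x :> y \<and> y \<ge> 0" by auto
qed

definition hd :: "real \<Rightarrow> real \<Rightarrow> real" where
  "hd a x = (ln (x+1) - ln x) - a * (ln (a*x+1) - ln (a*x))"

lemma L5: fixes a x :: real assumes "x > 0" "0 < a" "a \<le> 1" shows "hd a x \<ge> 0"
proof -
  have "(a*x) * (ln (a*x+1) - ln (a*x)) \<le> x * (ln (x+1) - ln x)"
    using assms mult_right_mono[of a 1 x] by (intro L4) auto
  then have "x * (a * (ln (a*x+1) - ln (a*x))) \<le> x * (ln (x+1) - ln x)" by (simp add: algebra_simps)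
  then have "a * (ln (a*x+1) - ln (a*x)) \<le> ln (x+1) - ln x" using assms(1) by simp
  then show ?thesis unfolding hd_def by simp
qed

lemma lnq: fixes y :: real assumes "y > 0" shows "ln (y+1) - ln y = ln (1 + 1/y)"
proof -
  have "1 + 1/y = (y+1)/y" using assms by (simp add: add_divide_distrib)
  then show ?thesis using assms by (simp add: ln_div)
qed

lemma L6: fixes a x :: real assumes "a*x \<ge> 2" "0 < a" "a \<le> 1" shows "hd a x \<le> 2/(3*a*x^2)"
proof -
  have ax: "a*x > 0" using assms by simp
  have x: "x > 0" using ax assms(2) by (simp add: zero_less_mult_iff)
  have "a*x \<le> 1*x" using assms(3) x by (intro mult_right_mono) auto
  then have x2: "x \<ge> 2" using assms(1) by simp
  have u: "ln (x+1) - ln x \<le> 1/x - (1/x)^2/2 + (1/x)^3/3"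
    using L2[of "1/x"] x lnq[OF x] by simp
  have l: "1/(a*x) - (1/(a*x))^2/2 \<le> ln (a*x+1) - ln (a*x)"
    using L1[of "1/(a*x)"] ax lnq[OF ax] by simp
  then have l': "a*(1/(a*x) - (1/(a*x))^2/2) \<le> a*(ln (a*x+1) - ln (a*x))"
    using assms(2) by simp
  have e1: "a*(1/(a*x) - (1/(a*x))^2/2) = 1/x - 1/(2*a*x^2)"
    using assms(2) x by (simp add: field_simps power2_eq_square)
  have "hd a x \<le> 1/x - (1/x)^2/2 + (1/x)^3/3 - (1/x - 1/(2*a*x^2))"
    unfolding hd_def using u l' e1 by linarith
  also have "\<dots> = (3*x - 3*a*x + 2*a) / (6*a*x^3)"
    using assms(2) x by (simp add: field_simps power2_eq_square power3_eq_cube)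
  also have "\<dots> \<le> (4*x) / (6*a*x^3)"
  proof (rule divide_right_mono)
    have "3*a*x \<ge> 0" using ax by simp
    then show "3*x - 3*a*x + 2*a \<le> 4*x" using x2 assms(2) assms(3) by linarith
    show "0 \<le> 6*a*x^3" using assms(2) x by simp
  qed
  also have "\<dots> = 2/(3*a*x^2)"
    using assms(2) x by (simp add: field_simps power2_eq_square power3_eq_cube)
  finally show ?thesis .
qed

lemma g_deriv: fixes x :: real assumes "x > 0" shows "DERIV g x :> ln (x+1) - ln x"
proof -
  have "DERIV (\<lambda>x. (x + 1) * ln (x + 1) - x * ln x) x :> (1 * ln (x+1) + (x+1) * (1/(x+1))) - (1 * ln x + x * (1/x))"
    by (rule derivative_eq_intros refl | use assms in simp)+
  moreover have "(1 * ln (x+1) + (x+1) * (1/(x+1))) - (1 * ln x + x * (1/x)) = ln (x+1) - ln x"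
    using assms by simp
  ultimately show ?thesis unfolding g_def[abs_def] by simp
qed

lemma h_deriv: fixes a x :: real assumes "x > 0" "a > 0" shows "DERIV (\<lambda>x. g x - g (a*x)) x :> hd a x"
proof -
  have ax: "a*x > 0" using assms by simp
  have d2: "DERIV (\<lambda>x. a*x) x :> a" using DERIV_cmult[OF DERIV_ident, of a] by simp
  have d3: "DERIV (\<lambda>x. g (a*x)) x :> (ln (a*x+1) - ln (a*x)) * a"
    using DERIV_chain2[of g _ "\<lambda>x. a*x", OF g_deriv[OF ax] d2] .
  have "DERIV (\<lambda>x. g x - g (a*x)) x :> (ln (x+1) - ln x) - (ln (a*x+1) - ln (a*x)) * a"
    by (intro DERIV_diff g_deriv[OF assms(1)] d3)
  then show ?thesis unfolding hd_def by (simp add: algebra_simps)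
qed

lemma part1: fixes a N lam :: real
  assumes "0 < a" "a \<le> 1" "N > 0" "0 < lam" "lam \<le> 1" "lam * a * N \<ge> 2"
  shows "(g N - g (a*N)) - (g (lam*N) - g (a*(lam*N))) \<le> 2/(3*a*(lam*N))"
proof -
  define c where "c = 2/(3*a)"
  let ?F = "\<lambda>x. g x - g (a*x) + c * inverse x"
  have le: "lam*N \<le> N" using assms by simp
  have "?F (lam*N) \<ge> ?F N"
  proof (rule DERIV_nonpos_imp_nonincreasing[OF le])
    fix x assume x: "lam*N \<le> x" "x \<le> N"
    have "a*(lam*N) \<le> a*x" using x assms(1) by (intro mult_left_mono) auto
    then have ax2: "a*x \<ge> 2" using assms(6) by (simp add: algebra_simps)
    have "lam*N > 0" using assms(3,4) by simp
    then have xp: "x > 0" using x by linarith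
    have d: "DERIV (\<lambda>x. c * inverse x) x :> c * (- (inverse x ^ Suc (Suc 0)))"
      by (rule DERIV_cmult, rule DERIV_inverse) (use xp in simp)
    have dF: "DERIV ?F x :> hd a x + c * (- (inverse x ^ Suc (Suc 0)))"
      by (rule DERIV_add[OF h_deriv[OF xp assms(1)] d])
    moreover have "c * (inverse x ^ Suc (Suc 0)) = 2/(3*a*x^2)"
      using xp assms(1) unfolding c_def by (simp add: field_simps power2_eq_square)
    moreover have "hd a x \<le> 2/(3*a*x^2)" using L6[OF ax2 assms(1,2)] .
    ultimately have "hd a x + c * (- (inverse x ^ Suc (Suc 0))) \<le> 0" by simp
    then show "\<exists>y. DERIV ?F x :> y \<and> y \<le> 0" using dF by blast
  qed
  moreover have "c * inverse N \<ge> 0" using assms unfolding c_def by simp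
  ultimately have "(g N - g (a*N)) - (g (lam*N) - g (a*(lam*N))) \<le> c * inverse (lam*N)" by linarith
  also have "c * inverse (lam*N) = 2/(3*a*(lam*N))" unfolding c_def
    using assms by (simp add: field_simps)
  finally show ?thesis .
qed

lemma part_mono: fixes a N M :: real
  assumes "0 < a" "a \<le> 1" "N > 0" "N \<le> M"
  shows "(g N - g (a*N)) - (g M - g (a*M)) \<le> 0"
proof -
  have "g N - g (a*N) \<le> g M - g (a*M)"
  proof (rule DERIV_nonneg_imp_nondecreasing[OF assms(4)])
    fix x assume x: "N \<le> x" "x \<le> M"
    have xp: "x > 0" using x assms by simp
    show "\<exists>y. DERIV (\<lambda>x. g x - g (a*x)) x :> y \<and> y \<ge> 0"
      using h_deriv[OF xp assms(1)] L5[OF xp assms(1,2)] by blast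
  qed
  then show ?thesis by simp
qed

lemma g2_g: "g2 x = g x / ln 2"
  unfolding g2_def g_def log_def by (simp add: field_simps)

theorem proposition4:
  fixes eta NS :: real
  assumes "0 \<le> eta" and "eta < 1" and "NS > 0"
  shows "(\<forall>lam::real. 0 < lam \<and> lam \<le> 1 \<and> lam * (1 - eta) * NS \<ge> 2 \<longrightarrow>
            (g NS + g (eta * NS) - g ((1 - eta) * NS))
          - (g (lam * NS) + g (eta * NS) - g ((1 - eta) * lam * NS))
          \<le> 5 / (6 * lam * NS * (1 - eta)))
       \<and> (\<forall>eps::real. eps > 0 \<longrightarrow>
            (let lam = 5 / (6 * eps * NS * (1 - eta) * ln 2) in
              lam * (1 - eta) * NS \<ge> 2 \<longrightarrow>
                (g2 NS + g2 (eta * NS) - g2 ((1 - eta) * NS))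
              - (g2 (lam * NS) + g2 (eta * NS) - g2 ((1 - eta) * lam * NS))
              \<le> eps))"
proof -
  define a where "a = 1 - eta"
  have a: "0 < a" "a \<le> 1" using assms unfolding a_def by auto
  have P1: "(g NS + g (eta * NS) - g (a * NS))
          - (g (lam * NS) + g (eta * NS) - g (a * lam * NS))
          \<le> 5 / (6 * lam * NS * a)" if l: "0 < lam" "lam \<le> 1" "lam * a * NS \<ge> 2" for lam
  proof -
    have "(g NS + g (eta * NS) - g (a * NS))
          - (g (lam * NS) + g (eta * NS) - g (a * lam * NS))
        = (g NS - g (a*NS)) - (g (lam*NS) - g (a*(lam*NS)))" by (simp add: mult.assoc)
    also have "\<dots> \<le> 2/(3*a*(lam*NS))" using part1[OF a assms(3) l] .
    also have "\<dots> \<le> 5 / (6 * lam * NS * a)"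
      using a l assms(3) by (simp add: field_simps)
    finally show ?thesis .
  qed
  show ?thesis
  proof (intro conjI allI impI)
    fix lam :: real
    assume "0 < lam \<and> lam \<le> 1 \<and> lam * (1 - eta) * NS \<ge> 2"
    then show "(g NS + g (eta * NS) - g ((1 - eta) * NS))
          - (g (lam * NS) + g (eta * NS) - g ((1 - eta) * lam * NS))
          \<le> 5 / (6 * lam * NS * (1 - eta))" using P1 unfolding a_def by blast
  next
    fix eps :: real assume e: "eps > 0"
    have ln2: "ln (2::real) > 0" by simp
    define lam where "lam = 5 / (6 * eps * NS * a * ln 2)"
    have lp: "lam > 0" unfolding lam_def using e a assms(3) ln2 by simp
    have conv: "(g2 NS + g2 (eta * NS) - g2 (a * NS))
              - (g2 (lam * NS) + g2 (eta * NS) - g2 (a * lam * NS))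
          = ((g NS - g (a*NS)) - (g (lam*NS) - g (a*(lam*NS)))) / ln 2"
      unfolding g2_g by (simp add: field_simps mult.assoc)
    have "lam * a * NS \<ge> 2 \<longrightarrow>
           (g2 NS + g2 (eta * NS) - g2 (a * NS))
              - (g2 (lam * NS) + g2 (eta * NS) - g2 (a * lam * NS)) \<le> eps"
    proof
      assume l2: "lam * a * NS \<ge> 2"
      show "(g2 NS + g2 (eta * NS) - g2 (a * NS))
              - (g2 (lam * NS) + g2 (eta * NS) - g2 (a * lam * NS)) \<le> eps"
      proof (cases "lam \<le> 1")
        case True
        have "(g NS - g (a*NS)) - (g (lam*NS) - g (a*(lam*NS))) \<le> 2/(3*a*(lam*NS))"
          using part1[OF a assms(3) lp True l2] .
        also have "\<dots> \<le> 5 / (6 * lam * NS * a)"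
          using a lp assms(3) by (simp add: field_simps)
        also have "\<dots> = eps * ln 2"
          unfolding lam_def using e a assms(3) ln2 by (simp add: field_simps)
        finally have "((g NS - g (a*NS)) - (g (lam*NS) - g (a*(lam*NS)))) / ln 2 \<le> eps"
          using ln2 by (simp add: divide_le_eq)
        then show ?thesis using conv by simp
      next
        case False
        have "(g NS - g (a*NS)) - (g (lam*NS) - g (a*(lam*NS))) \<le> 0"
          using part_mono[OF a assms(3), of "lam*NS"] False assms(3) by simp
        then have "((g NS - g (a*NS)) - (g (lam*NS) - g (a*(lam*NS)))) / ln 2 \<le> 0"
          using ln2 by (simp add: divide_nonpos_pos)
        then show ?thesis using conv e by simp
      qed
    qed
    then show "let lam = 5 / (6 * eps * NS * (1 - eta) * ln 2) in
              lam * (1 - eta) * NS \<ge> 2 \<longrightarrow>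
                (g2 NS + g2 (eta * NS) - g2 ((1 - eta) * NS))
              - (g2 (lam * NS) + g2 (eta * NS) - g2 ((1 - eta) * lam * NS))
              \<le> eps"
      unfolding Let_def lam_def a_def .
  qed
qed

end
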